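(* Let $D\subset\mathbb R^d$ be a bounded $\kappa$-fat open set. There exist a constant $a\in(0,2^{-6}]$ depending only on $\phi$ and $d$, and a constant $C>0$, such that for every $x_0\in D$ and every $r\in(0,1)$ with $B(x_0,r)\subset D$, $$\mathbb E_x\,\tau_{B(x_0,r)}\ge\mathbb E_x\,\tau_{B(x_0,4ar)}\ge C\,\frac{1}{\psi(\Phi(r)^{-1})}\qquad\text{for all } x\in B(x_0,ar).$$
   Context: Setting. Let $d\ge 2$. Let $W$ be a Brownian motion in $\mathbb R^d$ with generator $\Delta$. Let $S$ be a subordinator independent of $W$ whose Laplace exponent $\phi$ is a complete Bernstein function with $\phi(1)=1$ such that there exist $a_1,a_2>0$, $0<\delta_1\le\delta_2<1$ with $a_1(R/s)^{\delta_1}\le \phi(R)/\phi(s)\le a_2(R/s)^{\delta_2}$ for all $1<s\le R<\infty$. Let $Z_t=W_{S_t}$. Let $T$ be a subordinator independent of $Z$ whose Laplace exponent $\psi$ is a complete Bernstein function with $\psi(1)=1$ such that there exist $b_1,b_2>0$, $0<\gamma_1\le\gamma_2<1$ with $b_1(R/s)^{\gamma_1}\le \psi(R)/\psi(s)\le b_2(R/s)^{\gamma_2}$ for all $1<s\le R<\infty$. For an open set $D$, $Z^D$ is $Z$ killed upon exiting $D$ and $Y^D_t:=Z^D_{T_t}$; for $U\subset D$, $\tau_U=\inf\{t>0:Y^D_t\notin U\}$. $\Phi(r):=1/\phi(r^{-2})$. For $0<\kappa<1$, $D$ is $\kappa$-fat if there is $R_1>0$ such that for all $x\in\overline D$ and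 $r\in(0,R_1]$ there is a ball $B(A_r(x),\kappa r)\subset D\cap B(x,r)$. *)

theory Defs
  imports "HOL-Probability.Probability"
begin

definition completely_monotone_on :: "real set \<Rightarrow> (real \<Rightarrow> real) \<Rightarrow> bool" where
  "completely_monotone_on I f \<longleftrightarrow>
     (\<exists>g :: nat \<Rightarrow> real \<Rightarrow> real.
        (\<forall>x\<in>I. g 0 x = f x) \<and>
        (\<forall>n. \<forall>x\<in>I. (g n has_real_derivative g (Suc n) x) (at x)) \<and>
        (\<forall>n. \<forall>x\<in>I. (-1) ^ n * g n x \<ge> 0))"

definition complete_bernstein :: "(real \<Rightarrow> real) \<Rightarrow> bool" where
  "complete_bernstein \<phi> \<longleftrightarrow>
     (\<exists>a b m. a \<ge> 0 \<and> b \<ge> 0 \<and> completely_monotone_on {0<..} m \<and>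
        (\<integral>\<^sup>+ t\<in>{0<..}. ennreal (min 1 t * m t) \<partial>lborel) < \<infinity> \<and>
        (\<forall>l>0. ennreal (\<phi> l) =
            ennreal a + ennreal (b * l) +
            (\<integral>\<^sup>+ t\<in>{0<..}. ennreal ((1 - exp (- l * t)) * m t) \<partial>lborel)))"

definition wsc :: "(real \<Rightarrow> real) \<Rightarrow> real \<Rightarrow> real \<Rightarrow> real \<Rightarrow> real \<Rightarrow> bool" where
  "wsc \<phi> a1 a2 d1 d2 \<longleftrightarrow> 0 < a1 \<and> 0 < a2 \<and> 0 < d1 \<and> d1 \<le> d2 \<and> d2 < 1 \<and>
     (\<forall>s R. 1 < s \<longrightarrow> s \<le> R \<longrightarrow>
        a1 * (R / s) powr d1 \<le> \<phi> R / \<phi> s \<and> \<phi> R / \<phi> s \<le> a2 * (R / s) powr d2)"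

definition Phi :: "(real \<Rightarrow> real) \<Rightarrow> real \<Rightarrow> real" where
  "Phi \<phi> r = 1 / \<phi> (r powr (-2))"

definition indep_increments :: "'w measure \<Rightarrow> (real \<Rightarrow> 'w \<Rightarrow> 'b::real_normed_vector) \<Rightarrow> bool" where
  "indep_increments M X \<longleftrightarrow>
     (\<forall>(t::nat \<Rightarrow> real) n. 0 \<le> t 0 \<and> (\<forall>i<n. t i < t (Suc i)) \<longrightarrow>
        prob_space.indep_vars M (\<lambda>_. borel) (\<lambda>i \<omega>. X (t (Suc i)) \<omega> - X (t i) \<omega>) {..<n})"

text \<open>Gaussian kernel of Brownian motion with generator the Laplacian (covariance 2t I).\<close>
definition heat_kernel :: "real \<Rightarrow> 'a::euclidean_space \<Rightarrow> real" where
  "heat_kernel t y = (4 * pi * t) powr (- real DIM('a) / 2) * exp (- (norm y)\<^sup>2 / (4 * t))"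

definition brownian_motion :: "'w measure \<Rightarrow> (real \<Rightarrow> 'w \<Rightarrow> 'a::euclidean_space) \<Rightarrow> bool" where
  "brownian_motion M W \<longleftrightarrow> prob_space M \<and>
     (\<forall>t. W t \<in> borel_measurable M) \<and>
     (\<forall>\<omega>\<in>space M. W 0 \<omega> = 0 \<and> continuous_on {0..} (\<lambda>t. W t \<omega>)) \<and>
     indep_increments M W \<and>
     (\<forall>s t. 0 \<le> s \<longrightarrow> s < t \<longrightarrow>
        distr M lborel (\<lambda>\<omega>. W t \<omega> - W s \<omega>) = density lborel (\<lambda>y. ennreal (heat_kernel (t - s) y)))"

definition subordinator :: "'w measure \<Rightarrow> (real \<Rightarrow> 'w \<Rightarrow> real) \<Rightarrow> (real \<Rightarrow> real) \<Rightarrow> bool" where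
  "subordinator M S \<phi> \<longleftrightarrow> prob_space M \<and>
     (\<forall>t. S t \<in> borel_measurable M) \<and>
     (\<forall>\<omega>\<in>space M. S 0 \<omega> = 0 \<and> mono_on {0..} (\<lambda>t. S t \<omega>) \<and>
        (\<forall>t\<ge>0. continuous (at_right t) (\<lambda>s. S s \<omega>))) \<and>
     indep_increments M S \<and>
     (\<forall>s t l. 0 \<le> s \<longrightarrow> s \<le> t \<longrightarrow> 0 < l \<longrightarrow>
        (\<integral>\<omega>. exp (- l * (S t \<omega> - S s \<omega>)) \<partial>M) = exp (- (t - s) * \<phi> l))"

abbreviation path_space :: "('a::topological_space) measure \<Rightarrow> (real \<Rightarrow> 'a) measure" where
  "path_space N \<equiv> Pi\<^sub>M UNIV (\<lambda>_. N)"

definition indep_rv :: "'w measure \<Rightarrow> 'b measure \<Rightarrow> ('w \<Rightarrow> 'b) \<Rightarrow> 'c measure \<Rightarrow> ('w \<Rightarrow> 'c) \<Rightarrow> bool" where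
  "indep_rv M Ma X Mb Y \<longleftrightarrow> X \<in> measurable M Ma \<and> Y \<in> measurable M Mb \<and>
     (\<forall>A\<in>sets Ma. \<forall>B\<in>sets Mb.
        measure M (X -` A \<inter> Y -` B \<inter> space M) =
        measure M (X -` A \<inter> space M) * measure M (Y -` B \<inter> space M))"

text \<open>Exit time from U of a path with cemetery None (None is never in U); the infimum of the
  empty set is infinity.\<close>
definition exit_time :: "(real \<Rightarrow> 'a option) \<Rightarrow> 'a set \<Rightarrow> ennreal" where
  "exit_time p U = (INF t\<in>{t. 0 < t \<and> (case p t of None \<Rightarrow> True | Some y \<Rightarrow> y \<notin> U)}. ennreal t)"

definition killed :: "'a set \<Rightarrow> (real \<Rightarrow> 'a) \<Rightarrow> real \<Rightarrow> 'a option" where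
  "killed D f t = (if ennreal t < exit_time (\<lambda>s. Some (f s)) D then Some (f t) else None)"

text \<open>Y^D started at x: Y^D_t = Z^D_{T_t}, where Z_t = x + W_{S_t}.\<close>
definition YD :: "(real \<Rightarrow> 'w \<Rightarrow> 'a::real_normed_vector) \<Rightarrow> (real \<Rightarrow> 'w \<Rightarrow> real) \<Rightarrow>
     (real \<Rightarrow> 'w \<Rightarrow> real) \<Rightarrow> 'a set \<Rightarrow> 'a \<Rightarrow> 'w \<Rightarrow> real \<Rightarrow> 'a option" where
  "YD W S T D x \<omega> t = killed D (\<lambda>s. x + W (S s \<omega>) \<omega>) (T t \<omega>)"

definition Etau :: "'w measure \<Rightarrow> (real \<Rightarrow> 'w \<Rightarrow> 'a::real_normed_vector) \<Rightarrow> (real \<Rightarrow> 'w \<Rightarrow> real) \<Rightarrow>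
     (real \<Rightarrow> 'w \<Rightarrow> real) \<Rightarrow> 'a set \<Rightarrow> 'a set \<Rightarrow> 'a \<Rightarrow> ennreal" where
  "Etau M W S T D U x = (\<integral>\<^sup>+ \<omega>. exit_time (YD W S T D x \<omega>) U \<partial>M)"

definition sub_setting :: "'w measure \<Rightarrow> (real \<Rightarrow> 'w \<Rightarrow> 'a::euclidean_space) \<Rightarrow> (real \<Rightarrow> 'w \<Rightarrow> real) \<Rightarrow>
     (real \<Rightarrow> 'w \<Rightarrow> real) \<Rightarrow> (real \<Rightarrow> real) \<Rightarrow> (real \<Rightarrow> real) \<Rightarrow> bool" where
  "sub_setting M W S T \<phi> \<psi> \<longleftrightarrow>
     brownian_motion M W \<and> subordinator M S \<phi> \<and> subordinator M T \<psi> \<and>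
     indep_rv M (path_space borel) (\<lambda>\<omega> t. W t \<omega>) (path_space borel) (\<lambda>\<omega> t. S t \<omega>) \<and>
     indep_rv M (path_space borel) (\<lambda>\<omega> t. W (S t \<omega>) \<omega>) (path_space borel) (\<lambda>\<omega> t. T t \<omega>) \<and>
     complete_bernstein \<psi> \<and> \<psi> 1 = 1 \<and> (\<exists>b1 b2 g1 g2. wsc \<psi> b1 b2 g1 g2)"

definition kappa_fat :: "real \<Rightarrow> 'a::euclidean_space set \<Rightarrow> bool" where
  "kappa_fat \<kappa> D \<longleftrightarrow> 0 < \<kappa> \<and> \<kappa> < 1 \<and>
     (\<exists>R1>0. \<forall>x\<in>closure D. \<forall>r. 0 < r \<and> r \<le> R1 \<longrightarrow>
        (\<exists>A. ball A (\<kappa> * r) \<subseteq> D \<inter> ball x r))"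

end

theory Submission
  imports Defs
begin

lemma (in prob_space) ottaviani:
  fixes X :: "nat \<Rightarrow> 'a \<Rightarrow> 'v::euclidean_space"
  assumes ind: "indep_vars (\<lambda>_. borel) X {..<n}"
    and lam: "0 < lam" and beta: "0 \<le> \<beta>"
    and tail: "\<And>k. k < n \<Longrightarrow> prob {\<omega>\<in>space M. lam \<le> norm (\<Sum>i\<in>{k..<n}. X i \<omega>)} \<le> \<beta>"
  shows "(1 - \<beta>) * prob {\<omega>\<in>space M. \<exists>k\<le>n. 2*lam \<le> norm (\<Sum>i<k. X i \<omega>)}
         \<le> prob {\<omega>\<in>space M. lam \<le> norm (\<Sum>i<n. X i \<omega>)}"
proof -
  have Xm: "\<And>i. i < n \<Longrightarrow> X i \<in> borel_measurable M"
    using ind by (auto simp: indep_vars_def)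
  define S where "S k \<omega> = (\<Sum>i<k. X i \<omega>)" for k \<omega>
  have Sm: "\<And>k. k \<le> n \<Longrightarrow> S k \<in> borel_measurable M"
    unfolding S_def by (intro borel_measurable_sum) (auto intro: Xm)
  have Snm: "\<And>k. k \<le> n \<Longrightarrow> (\<lambda>\<omega>. norm (S k \<omega>)) \<in> borel_measurable M"
    by (rule measurable_compose[OF Sm borel_measurable_norm])
  define A where "A k = {\<omega>\<in>space M. 2*lam \<le> norm (S k \<omega>) \<and> (\<forall>j<k. norm (S j \<omega>) < 2*lam)}" for k
  define B where "B k = {\<omega>\<in>space M. norm (S n \<omega> - S k \<omega>) < lam}" for k
  have Aev: "A k \<in> events" if "k \<le> n" for k
  proof -
    have "A k = {\<omega>\<in>space M. 2*lam \<le> norm (S k \<omega>)} \<inter> (\<Inter>j\<in>{..<k}. {\<omega>\<in>space M. norm (S j \<omega>) < 2*lam})"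
      unfolding A_def by auto
    also have "\<dots> \<in> events"
    proof (cases "k = 0")
      case True then show ?thesis using that Snm[of 0]
        by (auto intro!: borel_measurable_le borel_measurable_const)
    next
      case False then show ?thesis using that
        by (intro sets.Int sets.finite_INT borel_measurable_le borel_measurable_less
          Snm borel_measurable_const) auto
    qed
    finally show ?thesis .
  qed
  have Bev: "B k \<in> events" if "k \<le> n" for k
    unfolding B_def using that
    by (intro borel_measurable_less measurable_compose[OF _ borel_measurable_norm] borel_measurable_diff Sm borel_measurable_const) auto
  have Un: "{\<omega>\<in>space M. \<exists>k\<le>n. 2*lam \<le> norm (\<Sum>i<k. X i \<omega>)} = (\<Union>k\<in>{..n}. A k)"
  proof (intro equalityI subsetI)
    fix \<omega> assume "\<omega> \<in> {\<omega>\<in>space M. \<exists>k\<le>n. 2*lam \<le> norm (\<Sum>i<k. X i \<omega>)}"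
    then obtain k where k: "\<omega> \<in> space M" "k \<le> n" "2*lam \<le> norm (S k \<omega>)" by (auto simp: S_def)
    define m where "m = (LEAST m. 2*lam \<le> norm (S m \<omega>))"
    have m1: "2*lam \<le> norm (S m \<omega>)"
      using LeastI[where P="\<lambda>m. 2*lam \<le> norm (S m \<omega>)", OF k(3)] unfolding m_def .
    have m2: "m \<le> k"
      using Least_le[where P="\<lambda>m. 2*lam \<le> norm (S m \<omega>)", OF k(3)] unfolding m_def .
    have m3: "\<forall>j<m. norm (S j \<omega>) < 2*lam"
    proof (intro allI impI)
      fix j assume "j < m"
      then have "\<not> 2*lam \<le> norm (S j \<omega>)"
        using not_less_Least[where P="\<lambda>m. 2*lam \<le> norm (S m \<omega>)"] unfolding m_def by blast
      then show "norm (S j \<omega>) < 2*lam" by simp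
    qed
    have "\<omega> \<in> A m" using k(1) m1 m3 unfolding A_def by blast
    then show "\<omega> \<in> (\<Union>k\<in>{..n}. A k)" using m2 k(2) by auto
  qed (unfold A_def S_def, blast)
  have disj: "disjoint_family_on A {..n}"
  proof -
    { fix k m \<omega> assume "k < m" "\<omega> \<in> A k" "\<omega> \<in> A m"
      then have False unfolding A_def by force }
    then show ?thesis unfolding disjoint_family_on_def
      by (metis disjoint_iff linorder_neqE_nat)
  qed
  have Sdiff: "S n \<omega> - S k \<omega> = (\<Sum>i\<in>{k..<n}. X i \<omega>)" if "k \<le> n" for k \<omega>
  proof -
    have "S n \<omega> = (\<Sum>i\<in>{0..<k}. X i \<omega>) + (\<Sum>i\<in>{k..<n}. X i \<omega>)"
      unfolding S_def lessThan_atLeast0 using that by (simp add: sum.atLeastLessThan_concat)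
    then show ?thesis unfolding S_def lessThan_atLeast0 by simp
  qed
  have Bn: "B n = space M" unfolding B_def using lam by auto
  have PB: "1 - \<beta> \<le> prob (B k)" if "k \<le> n" for k
  proof (cases "k = n")
    case True then show ?thesis using Bn beta prob_space by simp
  next
    case False
    then have kn: "k < n" using that by simp
    have "space M - B k = {\<omega>\<in>space M. lam \<le> norm (\<Sum>i\<in>{k..<n}. X i \<omega>)}"
      unfolding B_def using Sdiff[OF that] by auto
    then have "prob (space M - B k) \<le> \<beta>" using tail[OF kn] by simp
    then show ?thesis using prob_compl[OF Bev[OF that]] by simp
  qed
  have compm: "(\<lambda>x. x i) \<in> borel_measurable (PiM I (\<lambda>_. borel))" if "i \<in> I" for i and I :: "nat set"
    using that by (rule measurable_component_singleton)
  have AB: "prob (A k \<inter> B k) = prob (A k) * prob (B k)" if "k \<le> n" for k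
  proof (cases "k = n")
    case True then show ?thesis using Bn sets.sets_into_space[OF Aev[OF that]]
      by (simp add: Int_absorb2 prob_space)
  next
    case False
    then have kn: "k < n" using that by simp
    let ?f = "\<lambda>\<omega>. restrict (\<lambda>i. X i \<omega>) {..<k}"
    let ?g = "\<lambda>\<omega>. restrict (\<lambda>i. X i \<omega>) {k..<n}"
    have iv: "indep_var (PiM {..<k} (\<lambda>_. borel)) ?f (PiM {k..<n} (\<lambda>_. borel)) ?g"
      by (rule indep_var_restrict[OF ind]) (use kn in auto)
    define Xa where "Xa = {x\<in>space (PiM {..<k} (\<lambda>_::nat. borel::'v measure)).
       2*lam \<le> norm (\<Sum>i<k. x i) \<and> (\<forall>j<k. norm (\<Sum>i<j. x i) < 2*lam)}"
    define Xb where "Xb = {x\<in>space (PiM {k..<n} (\<lambda>_::nat. borel::'v measure)).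
       norm (\<Sum>i\<in>{k..<n}. x i) < lam}"
    have sumA: "(\<lambda>x. \<Sum>i<j. x i) \<in> borel_measurable (PiM {..<k} (\<lambda>_::nat. borel::'v measure))" if "j \<le> k" for j
      using that by (intro borel_measurable_sum compm) auto
    have Xa: "Xa \<in> sets (PiM {..<k} (\<lambda>_::nat. borel::'v measure))"
    proof -
      have "Xa = {x\<in>space (PiM {..<k} (\<lambda>_::nat. borel::'v measure)). 2*lam \<le> norm (\<Sum>i<k. x i)}
         \<inter> (\<Inter>j\<in>{..<k}. {x\<in>space (PiM {..<k} (\<lambda>_::nat. borel::'v measure)). norm (\<Sum>i<j. x i) < 2*lam})"
        unfolding Xa_def by auto
      also have "\<dots> \<in> sets (PiM {..<k} (\<lambda>_::nat. borel::'v measure))"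
      proof (cases "k = 0")
        case True then show ?thesis
          by (auto intro!: borel_measurable_le borel_measurable_const measurable_compose[OF sumA borel_measurable_norm])
      next
        case False then show ?thesis
          by (intro sets.Int sets.finite_INT borel_measurable_le borel_measurable_less
            measurable_compose[OF sumA borel_measurable_norm] borel_measurable_const) auto
      qed
      finally show ?thesis .
    qed
    have Xb: "Xb \<in> sets (PiM {k..<n} (\<lambda>_::nat. borel::'v measure))"
      unfolding Xb_def
      by (intro borel_measurable_less measurable_compose[OF borel_measurable_sum borel_measurable_norm]
          borel_measurable_const compm) auto
    have eqA: "A k = ?f -` Xa \<inter> space M"
      unfolding A_def Xa_def S_def using that by (auto simp: space_PiM)
    have eqB: "B k = ?g -` Xb \<inter> space M"
      unfolding B_def Xb_def using Sdiff[OF that] by (auto simp: space_PiM)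
    have eqAB: "A k \<inter> B k = (\<lambda>\<omega>. (?f \<omega>, ?g \<omega>)) -` (Xa \<times> Xb) \<inter> space M"
      unfolding eqA eqB by auto
    show ?thesis unfolding eqAB using indep_varD[OF iv Xa Xb] eqA eqB by simp
  qed
  have ABsub: "A k \<inter> B k \<subseteq> {\<omega>\<in>space M. lam \<le> norm (\<Sum>i<n. X i \<omega>)}" for k
  proof
    fix \<omega> assume "\<omega> \<in> A k \<inter> B k"
    then have "\<omega> \<in> space M" "2*lam \<le> norm (S k \<omega>)" "norm (S n \<omega> - S k \<omega>) < lam"
      by (auto simp: A_def B_def)
    moreover have "norm (S k \<omega>) \<le> norm (S n \<omega>) + norm (S n \<omega> - S k \<omega>)"
      by (metis norm_triangle_ineq4 add.commute norm_minus_commute diff_add_cancel norm_triangle_ineq)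
    ultimately show "\<omega> \<in> {\<omega>\<in>space M. lam \<le> norm (\<Sum>i<n. X i \<omega>)}" by (auto simp: S_def)
  qed
  have "(1 - \<beta>) * prob (\<Union>k\<in>{..n}. A k) = (\<Sum>k\<le>n. (1 - \<beta>) * prob (A k))"
    using Aev disj by (subst finite_measure_finite_Union) (auto simp: sum_distrib_left)
  also have "\<dots> \<le> (\<Sum>k\<le>n. prob (A k) * prob (B k))"
    by (intro sum_mono) (metis PB atMost_iff measure_nonneg mult.commute mult_left_mono)
  also have "\<dots> = (\<Sum>k\<le>n. prob (A k \<inter> B k))" using AB by simp
  also have "\<dots> = prob (\<Union>k\<in>{..n}. A k \<inter> B k)"
    using Aev Bev disj by (subst finite_measure_finite_Union) (auto simp: disjoint_family_on_def, blast)
  also have "\<dots> \<le> prob {\<omega>\<in>space M. lam \<le> norm (\<Sum>i<n. X i \<omega>)}"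
    using ABsub Snm[of n] by (intro finite_measure_mono) (auto intro!: borel_measurable_le simp: S_def[symmetric])
  finally show ?thesis using Un by simp
qed

lemma hk_scale:
  fixes x :: "'a::euclidean_space"
  assumes s: "0 < s"
  shows "heat_kernel s (sqrt s *\<^sub>R x) * sqrt s ^ DIM('a) = heat_kernel 1 x"
proof -
  have e: "exp (- (norm (sqrt s *\<^sub>R x))\<^sup>2 / (4 * s)) = exp (- (norm x)\<^sup>2 / 4)"
    using s by (simp add: power_mult_distrib)
  have p: "(4 * pi * s) powr (- real DIM('a) / 2) = (4 * pi) powr (- real DIM('a) / 2) * s powr (- real DIM('a) / 2)"
    using s by (simp add: powr_mult)
  have q: "sqrt s ^ DIM('a) = s powr (real DIM('a) / 2)"
    using s by (simp add: sqrt_def powr_realpow[symmetric] real_root_pos_pos powr_powr root_powr_inverse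
        flip: powr_realpow)
  have r: "s powr (- real DIM('a) / 2) * s powr (real DIM('a) / 2) = 1"
    using s by (simp add: powr_add[symmetric])
  show ?thesis unfolding heat_kernel_def e p q
    using r by (simp add: mult.assoc mult.left_commute)
qed

lemma hk_meas[measurable]: "heat_kernel s \<in> borel_measurable (borel :: 'a::euclidean_space measure)"
  unfolding heat_kernel_def[abs_def] by measurable

lemma tail_scale:
  fixes lam :: real
  assumes s: "0 < s"
  shows "emeasure (density lborel (\<lambda>y. ennreal (heat_kernel s y))) {y::'a::euclidean_space. lam \<le> norm y}
       = emeasure (density lborel (\<lambda>y. ennreal (heat_kernel 1 y))) {x::'a. lam / sqrt s \<le> norm x}"
proof -
  let ?c = "sqrt s"
  have c: "?c \<noteq> 0" using s by simp
  have "emeasure (density lborel (\<lambda>y. ennreal (heat_kernel s y))) {y::'a. lam \<le> norm y}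
      = (\<integral>\<^sup>+ y. ennreal (heat_kernel s y) * indicator {y::'a. lam \<le> norm y} y \<partial>lborel)"
    by (subst emeasure_density) auto
  also have "\<dots> = (\<integral>\<^sup>+ x. ennreal (\<bar>?c\<bar> ^ DIM('a)) * (ennreal (heat_kernel s (0 + ?c *\<^sub>R x)) * indicator {y::'a. lam \<le> norm y} (0 + ?c *\<^sub>R x)) \<partial>lborel)"
    by (subst lborel_affine[OF c, of 0]) (simp add: nn_integral_density nn_integral_distr)
  also have "\<dots> = (\<integral>\<^sup>+ x. ennreal (heat_kernel 1 x) * indicator {x::'a. lam / sqrt s \<le> norm x} x \<partial>lborel)"
  proof (intro nn_integral_cong)
    fix x :: 'a
    have "heat_kernel s (?c *\<^sub>R x) \<ge> 0" unfolding heat_kernel_def by simp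
    moreover have "(lam \<le> norm (?c *\<^sub>R x)) = (lam / sqrt s \<le> norm x)"
      using s by (simp add: divide_le_eq mult.commute)
    ultimately show "ennreal (\<bar>?c\<bar> ^ DIM('a)) * (ennreal (heat_kernel s (0 + ?c *\<^sub>R x)) * indicator {y::'a. lam \<le> norm y} (0 + ?c *\<^sub>R x))
        = ennreal (heat_kernel 1 x) * indicator {x::'a. lam / sqrt s \<le> norm x} x"
      using hk_scale[OF s, of x] s
      by (auto simp: indicator_def ennreal_mult'[symmetric] mult.commute)
  qed
  also have "\<dots> = emeasure (density lborel (\<lambda>y. ennreal (heat_kernel 1 y))) {x::'a. lam / sqrt s \<le> norm x}"
    by (subst emeasure_density) auto
  finally show ?thesis by simp
qed

lemma bm_meas: "brownian_motion M W \<Longrightarrow> W t \<in> borel_measurable M"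
  by (simp add: brownian_motion_def)

lemma bm_mu1_prob:
  assumes bm: "brownian_motion M (W :: real \<Rightarrow> 'w \<Rightarrow> 'a::euclidean_space)"
  shows "prob_space (density lborel (\<lambda>y. ennreal (heat_kernel 1 (y::'a))))"
proof -
  interpret prob_space M using bm by (simp add: brownian_motion_def)
  have m: "(\<lambda>\<omega>. W 1 \<omega> - W 0 \<omega>) \<in> measurable M lborel"
    using bm by (simp, intro borel_measurable_diff bm_meas[OF bm])
  have "distr M lborel (\<lambda>\<omega>. W 1 \<omega> - W 0 \<omega>) = density lborel (\<lambda>y. ennreal (heat_kernel (1 - 0) y))"
    using bm unfolding brownian_motion_def by (metis zero_less_one order_refl)
  then show ?thesis using prob_space_distr[OF m] by simp
qed

lemma bm_tail:
  assumes bm: "brownian_motion M (W :: real \<Rightarrow> 'w \<Rightarrow> 'a::euclidean_space)"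
    and st: "0 \<le> \<sigma>" "\<sigma> < \<tau>" "\<tau> \<le> h" and lam: "0 \<le> lam"
  shows "measure M {\<omega>\<in>space M. lam \<le> norm (W \<tau> \<omega> - W \<sigma> \<omega>)}
     \<le> measure (density lborel (\<lambda>y. ennreal (heat_kernel 1 y))) {x::'a. lam / sqrt h \<le> norm x}"
proof -
  interpret prob_space M using bm by (simp add: brownian_motion_def)
  interpret mu: prob_space "density lborel (\<lambda>y. ennreal (heat_kernel 1 (y::'a)))"
    by (rule bm_mu1_prob[OF bm])
  have m: "(\<lambda>\<omega>. W \<tau> \<omega> - W \<sigma> \<omega>) \<in> measurable M lborel"
    using bm by (simp, intro borel_measurable_diff bm_meas[OF bm])
  have d: "distr M lborel (\<lambda>\<omega>. W \<tau> \<omega> - W \<sigma> \<omega>) = density lborel (\<lambda>y. ennreal (heat_kernel (\<tau> - \<sigma>) y))"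
    using bm st unfolding brownian_motion_def by auto
  have S: "{y::'a. lam \<le> norm y} \<in> sets lborel" by simp
  have "measure M {\<omega>\<in>space M. lam \<le> norm (W \<tau> \<omega> - W \<sigma> \<omega>)}
      = measure (distr M lborel (\<lambda>\<omega>. W \<tau> \<omega> - W \<sigma> \<omega>)) {y::'a. lam \<le> norm y}"
    by (subst measure_distr[OF m S]) (auto intro!: arg_cong[where f="measure M"])
  also have "\<dots> = measure (density lborel (\<lambda>y. ennreal (heat_kernel 1 y))) {x::'a. lam / sqrt (\<tau> - \<sigma>) \<le> norm x}"
    unfolding d measure_def using tail_scale[of "\<tau> - \<sigma>" lam, where 'a='a] st by simp
  also have "\<dots> \<le> measure (density lborel (\<lambda>y. ennreal (heat_kernel 1 y))) {x::'a. lam / sqrt h \<le> norm x}"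
  proof (rule mu.finite_measure_mono)
    have "lam / sqrt h \<le> lam / sqrt (\<tau> - \<sigma>)"
      using st lam by (intro divide_left_mono) auto
    then show "{x::'a. lam / sqrt (\<tau> - \<sigma>) \<le> norm x} \<subseteq> {x::'a. lam / sqrt h \<le> norm x}" by auto
  qed simp
  finally show ?thesis .
qed

lemma sum_tele_range:
  fixes f :: "nat \<Rightarrow> 'a::ab_group_add"
  assumes "k \<le> n"
  shows "(\<Sum>i\<in>{k..<n}. f (Suc i) - f i) = f n - f k"
proof -
  have "(\<Sum>i<n. f (Suc i) - f i) = (\<Sum>i\<in>{0..<k}. f (Suc i) - f i) + (\<Sum>i\<in>{k..<n}. f (Suc i) - f i)"
    unfolding lessThan_atLeast0 using assms by (simp add: sum.atLeastLessThan_concat)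
  then show ?thesis unfolding lessThan_atLeast0[symmetric] sum_lessThan_telescope by (simp add: algebra_simps)
qed

lemma bm_dyadic:
  assumes bm: "brownian_motion M (W :: real \<Rightarrow> 'w \<Rightarrow> 'a::euclidean_space)"
    and h: "0 < h" and lam: "0 < lam"
    and beta: "\<beta> = measure (density lborel (\<lambda>y. ennreal (heat_kernel 1 y))) {x::'a. lam / sqrt h \<le> norm x}"
    and b1: "\<beta> < 1"
  shows "measure M {\<omega>\<in>space M. \<exists>k\<le>2^n. 2*lam < norm (W (h * real k / 2^n) \<omega>)} \<le> \<beta> / (1 - \<beta>)"
proof -
  interpret prob_space M using bm by (simp add: brownian_motion_def)
  define N :: nat where "N = 2^n"
  define t where "t i = h * real i / 2^n" for i
  define X where "X i \<omega> = W (t (Suc i)) \<omega> - W (t i) \<omega>" for i \<omega>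
  have t0: "t 0 = 0" and tN: "t N = h" by (simp_all add: t_def N_def)
  have tmono: "t i < t (Suc i)" for i using h by (simp add: t_def divide_strict_right_mono)
  have tle: "t i \<le> t j" if "i \<le> j" for i j using h that by (simp add: t_def divide_right_mono)
  have tlt: "t i < t j" if "i < j" for i j using h that by (simp add: t_def divide_strict_right_mono)
  have t0le: "0 \<le> t i" for i using tle[of 0 i] t0 by simp
  have ind: "indep_vars (\<lambda>_. borel) X {..<N}"
    using bm t0 tmono unfolding brownian_motion_def indep_increments_def X_def by auto
  have W0: "W 0 \<omega> = 0" if "\<omega> \<in> space M" for \<omega> using bm that by (simp add: brownian_motion_def)
  have bnn: "0 \<le> \<beta>" unfolding beta by simp
  have sumX: "(\<Sum>i<k. X i \<omega>) = W (t k) \<omega>" if "\<omega> \<in> space M" for k \<omega>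
    unfolding X_def using sum_lessThan_telescope[of "\<lambda>i. W (t i) \<omega>" k] t0 W0[OF that] by simp
  have tail: "prob {\<omega>\<in>space M. lam \<le> norm (\<Sum>i\<in>{k..<N}. X i \<omega>)} \<le> \<beta>" if "k < N" for k
  proof -
    have "{\<omega>\<in>space M. lam \<le> norm (\<Sum>i\<in>{k..<N}. X i \<omega>)} = {\<omega>\<in>space M. lam \<le> norm (W h \<omega> - W (t k) \<omega>)}"
      unfolding X_def using sum_tele_range[of k N "\<lambda>i. W (t i) _"] that tN by auto
    also have "prob \<dots> \<le> \<beta>" unfolding beta
      by (rule bm_tail[OF bm t0le]) (use tlt[OF that] tN lam in auto)
    finally show ?thesis .
  qed
  have ott: "(1 - \<beta>) * prob {\<omega>\<in>space M. \<exists>k\<le>N. 2*lam \<le> norm (\<Sum>i<k. X i \<omega>)}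
         \<le> prob {\<omega>\<in>space M. lam \<le> norm (\<Sum>i<N. X i \<omega>)}"
    by (rule ottaviani[OF ind lam bnn tail])
  have "prob {\<omega>\<in>space M. lam \<le> norm (\<Sum>i<N. X i \<omega>)} = prob {\<omega>\<in>space M. lam \<le> norm (W h \<omega> - W 0 \<omega>)}"
    using sumX tN W0 by (intro arg_cong[where f=prob]) auto
  also have "\<dots> \<le> \<beta>" unfolding beta
    by (rule bm_tail[OF bm]) (use h lam in auto)
  finally have ott2: "(1 - \<beta>) * prob {\<omega>\<in>space M. \<exists>k\<le>N. 2*lam \<le> norm (W (t k) \<omega>)} \<le> \<beta>"
    using ott sumX by (smt (verit, best) Collect_cong)
  have meas: "{\<omega>\<in>space M. \<exists>k\<le>N. 2*lam \<le> norm (W (t k) \<omega>)} \<in> events"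
  proof -
    have "{\<omega>\<in>space M. \<exists>k\<le>N. 2*lam \<le> norm (W (t k) \<omega>)} = (\<Union>k\<in>{..N}. {\<omega>\<in>space M. 2*lam \<le> norm (W (t k) \<omega>)})"
      by auto
    also have "\<dots> \<in> events"
      by (intro sets.finite_UN borel_measurable_le measurable_compose[OF bm_meas[OF bm] borel_measurable_norm]
          borel_measurable_const) auto
    finally show ?thesis .
  qed
  have "measure M {\<omega>\<in>space M. \<exists>k\<le>2^n. 2*lam < norm (W (h * real k / 2^n) \<omega>)}
     \<le> prob {\<omega>\<in>space M. \<exists>k\<le>N. 2*lam \<le> norm (W (t k) \<omega>)}"
    by (rule finite_measure_mono[OF _ meas]) (auto simp: N_def t_def)
  also have "\<dots> \<le> \<beta> / (1 - \<beta>)"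
    using ott2 b1 by (simp add: le_divide_eq mult.commute)
  finally show ?thesis .
qed

lemma dyadic_approx:
  fixes h u :: real
  assumes h: "0 < h" and u: "0 \<le> u" "u \<le> h"
  shows "\<exists>k. (\<forall>n. k n \<le> (2::nat)^n) \<and> (\<lambda>n. h * real (k n) / 2^n) \<longlonglongrightarrow> u"
proof -
  define k where "k n = nat \<lfloor>u * 2^n / h\<rfloor>" for n :: nat
  have x0: "0 \<le> u * 2^n / h" for n :: nat using h u by simp
  have kr: "real (k n) = \<lfloor>u * 2^n / h\<rfloor>" for n unfolding k_def using x0[of n] by simp
  have kle: "k n \<le> 2^n" for n
  proof -
    have "u * 2^n / h \<le> 2^n" using h u by (simp add: divide_le_eq mult.commute mult_left_mono)
    then have "real (k n) \<le> 2^n" unfolding kr by linarith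
    then show ?thesis by (metis of_nat_le_iff of_nat_numeral of_nat_power)
  qed
  have up: "h * real (k n) / 2^n \<le> u" for n
  proof -
    have "real (k n) \<le> u * 2^n / h" unfolding kr by linarith
    then have "h * real (k n) \<le> u * 2^n" using h by (simp add: le_divide_eq mult.commute)
    then show ?thesis by (simp add: divide_le_eq)
  qed
  have lo: "u - h / 2^n \<le> h * real (k n) / 2^n" for n
  proof -
    have "u * 2^n / h - 1 \<le> real (k n)" unfolding kr by linarith
    then have "u * 2^n - h \<le> h * real (k n)" using h by (simp add: field_simps)
    then have "(u * 2^n - h) / 2^n \<le> h * real (k n) / 2^n" by (simp add: divide_right_mono)
    moreover have "u - h / 2^n = (u * 2^n - h) / 2^n" by (simp add: field_simps)
    ultimately show ?thesis by simp
  qed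
  have l1: "(\<lambda>n. u - h / 2^n) \<longlonglongrightarrow> u - 0"
    by (intro tendsto_diff tendsto_const LIMSEQ_divide_realpow_zero) simp
  have e1: "\<forall>\<^sub>F n in sequentially. u - h / 2^n \<le> h * real (k n) / 2^n"
    by (intro always_eventually allI lo)
  have e2: "\<forall>\<^sub>F n in sequentially. h * real (k n) / 2^n \<le> u"
    by (intro always_eventually allI up)
  have "(\<lambda>n. h * real (k n) / 2^n) \<longlonglongrightarrow> u"
    using tendsto_sandwich[OF e1 e2] l1 by simp
  then show ?thesis using kle by blast
qed

lemma bm_good:
  assumes bm: "brownian_motion M (W :: real \<Rightarrow> 'w \<Rightarrow> 'a::euclidean_space)"
    and h: "0 < h" and lam: "0 < lam"
    and beta: "\<beta> = measure (density lborel (\<lambda>y. ennreal (heat_kernel 1 y))) {x::'a. lam / sqrt h \<le> norm x}"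
    and b1: "\<beta> < 1"
  shows "\<exists>G\<in>sets M. (\<forall>\<omega>\<in>G. \<forall>u. 0 \<le> u \<and> u \<le> h \<longrightarrow> norm (W u \<omega>) \<le> 2*lam)
           \<and> measure M (space M - G) \<le> \<beta> / (1 - \<beta>)"
proof -
  interpret prob_space M using bm by (simp add: brownian_motion_def)
  define E where "E n = {\<omega>\<in>space M. \<exists>k\<le>(2::nat)^n. 2*lam < norm (W (h * real k / 2^n) \<omega>)}" for n :: nat
  have Ems: "E n \<in> events" for n
  proof -
    have "E n = (\<Union>k\<in>{..(2::nat)^n}. {\<omega>\<in>space M. 2*lam < norm (W (h * real k / 2^n) \<omega>)})"
      unfolding E_def by auto
    also have "\<dots> \<in> events"
      by (intro sets.finite_UN borel_measurable_less measurable_compose[OF bm_meas[OF bm] borel_measurable_norm]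
          borel_measurable_const) auto
    finally show ?thesis .
  qed
  have inc: "incseq E"
  proof (rule incseq_SucI)
    fix n
    show "E n \<subseteq> E (Suc n)"
    proof
      fix \<omega> assume "\<omega> \<in> E n"
      then obtain k where k: "\<omega> \<in> space M" "k \<le> 2^n" "2*lam < norm (W (h * real k / 2^n) \<omega>)"
        unfolding E_def by auto
      have "h * real (2*k) / 2^Suc n = h * real k / 2^n" by simp
      moreover have "2*k \<le> 2^Suc n" using k(2) by simp
      ultimately have "\<exists>k'\<le>(2::nat)^Suc n. 2*lam < norm (W (h * real k' / 2^Suc n) \<omega>)"
        using k(3) by metis
      then show "\<omega> \<in> E (Suc n)" unfolding E_def using k(1) by blast
    qed
  qed
  define G where "G = space M - (\<Union>n. E n)"
  have Gm: "G \<in> events" unfolding G_def using Ems by (intro sets.Diff sets.top sets.countable_UN) auto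
  have compl: "space M - G = (\<Union>n. E n)" unfolding G_def E_def by blast
  have bnd: "measure M (E n) \<le> \<beta> / (1 - \<beta>)" for n
    unfolding E_def by (rule bm_dyadic[OF bm h lam beta b1])
  have "(\<lambda>n. measure M (E n)) \<longlonglongrightarrow> measure M (\<Union>n. E n)"
    by (rule finite_Lim_measure_incseq) (use Ems inc in auto)
  then have P: "measure M (space M - G) \<le> \<beta> / (1 - \<beta>)"
    unfolding compl by (rule LIMSEQ_le_const2) (use bnd in auto)
  have cont: "norm (W u \<omega>) \<le> 2*lam" if \<omega>: "\<omega> \<in> G" and u: "0 \<le> u" "u \<le> h" for \<omega> u
  proof -
    obtain k where k: "\<And>n. k n \<le> (2::nat)^n" "(\<lambda>n. h * real (k n) / 2^n) \<longlonglongrightarrow> u"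
      using dyadic_approx[OF h u] by blast
    have sp: "\<omega> \<in> space M" using \<omega> unfolding G_def by auto
    have c: "continuous_on {0..} (\<lambda>t. W t \<omega>)" using bm sp by (simp add: brownian_motion_def)
    have "(\<lambda>n. W (h * real (k n) / 2^n) \<omega>) \<longlonglongrightarrow> W u \<omega>"
      by (rule continuous_on_tendsto_compose[OF c k(2)]) (use u h in auto)
    then have lim: "(\<lambda>n. norm (W (h * real (k n) / 2^n) \<omega>)) \<longlonglongrightarrow> norm (W u \<omega>)"
      by (rule tendsto_norm)
    have "norm (W (h * real (k n) / 2^n) \<omega>) \<le> 2*lam" for n
    proof (rule ccontr)
      assume "\<not> ?thesis"
      then have "\<omega> \<in> E n" unfolding E_def using sp k(1)[of n] by (auto simp: not_le)
      then show False using \<omega> unfolding G_def by auto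
    qed
    then show ?thesis using lim by (intro LIMSEQ_le_const2) auto
  qed
  show ?thesis using Gm P cont by blast
qed

lemma cb_mono_enn:
  assumes cb: "complete_bernstein f" and xy: "0 < x" "x \<le> y"
  shows "ennreal (f x) \<le> ennreal (f y)"
proof -
  obtain a b m where ab: "a \<ge> 0" "b \<ge> 0" and cm: "completely_monotone_on {0<..} m"
    and rep: "\<forall>l>0. ennreal (f l) = ennreal a + ennreal (b * l) +
            (\<integral>\<^sup>+ t\<in>{0<..}. ennreal ((1 - exp (- l * t)) * m t) \<partial>lborel)"
    using cb unfolding complete_bernstein_def by blast
  obtain g where g0: "\<forall>x\<in>{0<..}. g 0 x = m x" and gs: "\<forall>n. \<forall>x\<in>{0<..}. (-1) ^ n * g n x \<ge> (0::real)"
    using cm unfolding completely_monotone_on_def by blast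
  have mpos: "0 \<le> m t" if "0 < t" for t using g0 gs that by (metis greaterThan_iff mult_1 power_0)
  have "(\<integral>\<^sup>+ t\<in>{0<..}. ennreal ((1 - exp (- x * t)) * m t) \<partial>lborel)
      \<le> (\<integral>\<^sup>+ t\<in>{0<..}. ennreal ((1 - exp (- y * t)) * m t) \<partial>lborel)"
  proof (rule nn_integral_mono)
    fix t :: real
    show "ennreal ((1 - exp (- x * t)) * m t) * indicator {0<..} t
       \<le> ennreal ((1 - exp (- y * t)) * m t) * indicator {0<..} t"
    proof (cases "0 < t")
      case True
      have "exp (- y * t) \<le> exp (- x * t)" using True xy by (simp add: mult_right_mono)
      then have "(1 - exp (- x * t)) * m t \<le> (1 - exp (- y * t)) * m t"
        using mpos[OF True] by (intro mult_right_mono) auto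
      then show ?thesis using True by (simp add: indicator_def ennreal_leI)
    qed simp
  qed
  moreover have "ennreal (b * x) \<le> ennreal (b * y)" using ab xy by (intro ennreal_leI mult_left_mono) auto
  ultimately show ?thesis using rep xy by (simp add: add_mono)
qed

lemma cb_mono:
  assumes cb: "complete_bernstein f" and f1: "f 1 = 1" and xy: "1 \<le> x" "x \<le> y"
  shows "1 \<le> f x" "f x \<le> f y"
proof -
  have ge1: "1 \<le> f z" if "1 \<le> z" for z
  proof -
    have "ennreal 1 \<le> ennreal (f z)" using cb_mono_enn[OF cb, of 1 z] that f1 by simp
    then show ?thesis by (simp add: ennreal_le_iff2)
  qed
  show "1 \<le> f x" using ge1 xy by simp
  have "ennreal (f x) \<le> ennreal (f y)" using cb_mono_enn[OF cb, of x y] xy by simp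
  then show "f x \<le> f y" using ge1[of y] xy by simp
qed

lemma sub_nonneg:
  assumes sub: "subordinator M S \<phi>" and \<omega>: "\<omega> \<in> space M" and t: "0 \<le> t"
  shows "0 \<le> S t \<omega>"
proof -
  have "S 0 \<omega> = 0" "mono_on {0..} (\<lambda>t. S t \<omega>)" using sub \<omega> by (auto simp: subordinator_def)
  then show ?thesis using t by (metis atLeast_iff mono_onD order_refl)
qed

lemma sub_markov:
  assumes sub: "subordinator M S \<phi>" and s: "0 \<le> s" and h: "0 < h"
  shows "measure M {\<omega>\<in>space M. h \<le> S s \<omega>} \<le> 2 * s * \<phi> (1 / h)"
proof -
  interpret prob_space M using sub by (simp add: subordinator_def)
  have Sm: "S t \<in> borel_measurable M" for t using sub by (simp add: subordinator_def)
  have S0: "S 0 \<omega> = 0" if "\<omega> \<in> space M" for \<omega> using sub that by (simp add: subordinator_def)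
  have lap: "(\<integral>\<omega>. exp (- (1/h) * (S s \<omega> - S 0 \<omega>)) \<partial>M) = exp (- (s - 0) * \<phi> (1/h))"
  proof -
    have L: "\<forall>s t l. 0 \<le> s \<longrightarrow> s \<le> t \<longrightarrow> 0 < l \<longrightarrow>
        (\<integral>\<omega>. exp (- l * (S t \<omega> - S s \<omega>)) \<partial>M) = exp (- (t - s) * \<phi> l)"
      using sub unfolding subordinator_def by blast
    show ?thesis using L[rule_format, of 0 s "1/h"] s h by simp
  qed
  have lap2: "(\<integral>\<omega>. exp (- (S s \<omega> / h)) \<partial>M) = exp (- (s * \<phi> (1/h)))"
  proof -
    have "(\<integral>\<omega>. exp (- (S s \<omega> / h)) \<partial>M) = (\<integral>\<omega>. exp (- (1/h) * (S s \<omega> - S 0 \<omega>)) \<partial>M)"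
      by (intro Bochner_Integration.integral_cong) (auto simp: S0)
    then show ?thesis using lap by simp
  qed
  have e1: "exp (-1::real) \<le> 1/2"
  proof -
    have "2 \<le> exp (1::real)" using exp_ge_add_one_self[of 1] by simp
    then show ?thesis by (simp add: exp_minus field_simps)
  qed
  have ptw: "indicator {\<omega>\<in>space M. h \<le> S s \<omega>} \<omega> \<le> 2 * (1 - exp (- (S s \<omega> / h)))" if "\<omega> \<in> space M" for \<omega>
  proof (cases "h \<le> S s \<omega>")
    case True
    then have "exp (- (S s \<omega> / h)) \<le> exp (-1)" using h by (simp add: le_divide_eq)
    then have "exp (- (S s \<omega> / h)) \<le> 1/2" using e1 by linarith
    then show ?thesis using True that by (simp add: indicator_def)
  next
    case False
    have "0 \<le> S s \<omega>" using sub_nonneg[OF sub that s] .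
    then have "exp (- (S s \<omega> / h)) \<le> 1" using h by simp
    then show ?thesis using False by (simp add: indicator_def)
  qed
  have A: "{\<omega>\<in>space M. h \<le> S s \<omega>} \<in> events" using Sm by measurable
  have int2: "integrable M (\<lambda>\<omega>. 2 * (1 - exp (- (S s \<omega> / h))))"
  proof (rule integrable_const_bound[where B=2])
    show "AE x in M. norm (2 * (1 - exp (- (S s x / h)))) \<le> 2"
      using sub_nonneg[OF sub _ s] h by (auto intro!: AE_I2 simp: abs_le_iff)
  qed (use Sm in measurable)
  have intE: "integrable M (\<lambda>\<omega>. exp (- (S s \<omega> / h)))"
    using int2 Sm by (intro integrable_const_bound[where B=1])
      (auto intro!: AE_I2 simp: sub_nonneg[OF sub _ s] h less_imp_le)
  have "measure M {\<omega>\<in>space M. h \<le> S s \<omega>} = (\<integral>\<omega>. indicator {\<omega>\<in>space M. h \<le> S s \<omega>} \<omega> \<partial>M)"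
    using A by simp
  also have "\<dots> \<le> (\<integral>\<omega>. 2 * (1 - exp (- (S s \<omega> / h))) \<partial>M)"
    using A int2 ptw by (intro integral_mono) (auto intro!: integrable_real_indicator simp: emeasure_eq_measure)
  also have "\<dots> = 2 * (1 - exp (- (s * \<phi> (1/h))))"
    using intE lap2 by (simp add: prob_space)
  also have "\<dots> \<le> 2 * (s * \<phi> (1/h))"
    using exp_ge_add_one_self[of "- (s * \<phi> (1/h))"] by simp
  finally show ?thesis by simp
qed

lemma exit_mono:
  assumes "U1 \<subseteq> U2"
  shows "exit_time p U1 \<le> exit_time p U2"
  unfolding exit_time_def
  by (rule INF_superset_mono) (use assms in \<open>auto split: option.split_asm\<close>)

lemma exit_lb:
  fixes Z :: "real \<Rightarrow> 'a" and Tp :: "real \<Rightarrow> real"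
  assumes UD: "U \<subseteq> D" and s: "0 < s"
    and Tmono: "mono_on {0..} Tp" and T0: "Tp 0 = 0" and Tt: "Tp t < s"
    and Zin: "\<And>v. 0 \<le> v \<Longrightarrow> v < s \<Longrightarrow> Z v \<in> U"
  shows "ennreal t \<le> exit_time (\<lambda>u. killed D Z (Tp u)) U"
proof -
  have exD: "ennreal s \<le> exit_time (\<lambda>v. Some (Z v)) D"
    unfolding exit_time_def
  proof (rule INF_greatest)
    fix v assume "v \<in> {v. 0 < v \<and> (case Some (Z v) of None \<Rightarrow> True | Some y \<Rightarrow> y \<notin> D)}"
    then have v: "0 < v" "Z v \<notin> D" by auto
    have "\<not> v < s" using Zin[of v] v UD by auto
    then show "ennreal s \<le> ennreal v" by (simp add: ennreal_leI)
  qed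
  show ?thesis unfolding exit_time_def
  proof (rule INF_greatest)
    fix u assume "u \<in> {u. 0 < u \<and> (case killed D Z (Tp u) of None \<Rightarrow> True | Some y \<Rightarrow> y \<notin> U)}"
    then have u: "0 < u" "case killed D Z (Tp u) of None \<Rightarrow> True | Some y \<Rightarrow> y \<notin> U" by auto
    show "ennreal t \<le> ennreal u"
    proof (rule ccontr)
      assume "\<not> ?thesis"
      then have ut: "u < t" using ennreal_leI[of t u] by linarith
      have Tu0: "0 \<le> Tp u" using mono_onD[OF Tmono, of 0 u] u(1) T0 by simp
      have "Tp u \<le> Tp t" using mono_onD[OF Tmono, of u t] u(1) ut by simp
      then have Tus: "Tp u < s" using Tt by simp
      then have "ennreal (Tp u) < ennreal s" using ennreal_less_iff[OF Tu0] by simp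
      then have "ennreal (Tp u) < exit_time (\<lambda>v. Some (Z v)) D"
        using exD by (rule order_less_le_trans)
      then have "killed D Z (Tp u) = Some (Z (Tp u))" unfolding killed_def by simp
      moreover have "Z (Tp u) \<in> U" using Zin[OF Tu0 Tus] .
      ultimately show False using u(2) by simp
    qed
  qed
qed

lemma psi_ratio:
  assumes cb: "complete_bernstein \<psi>" and p1: "\<psi> 1 = 1" and w: "wsc \<psi> b1 b2 g1 g2"
    and Y: "1 \<le> Y" "Y \<le> R" "R \<le> Mq * Y"
  shows "\<psi> R \<le> max (b2 * Mq powr g2) (\<psi> Mq) * \<psi> Y"
proof (cases "Y = 1")
  case True
  have "1 \<le> R" "R \<le> Mq" using Y True by auto
  then have "\<psi> R \<le> \<psi> Mq" using cb_mono[OF cb p1] by blast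
  then show ?thesis using True p1 by simp
next
  case False
  then have Y1: "1 < Y" using Y by simp
  have w': "\<psi> R / \<psi> Y \<le> b2 * (R / Y) powr g2" and g: "0 < g1" "g1 \<le> g2" "0 < b2"
    using w Y1 Y(2) unfolding wsc_def by auto
  have pY: "1 \<le> \<psi> Y" using cb_mono[OF cb p1, of Y Y] Y1 by simp
  have "R / Y \<le> Mq" using Y Y1 by (simp add: divide_le_eq)
  moreover have "0 \<le> R / Y" using Y by simp
  ultimately have "(R / Y) powr g2 \<le> Mq powr g2" using g by (intro powr_mono2) auto
  then have "\<psi> R / \<psi> Y \<le> b2 * Mq powr g2" using w' g by (smt (verit) mult_left_mono)
  then have "\<psi> R \<le> b2 * Mq powr g2 * \<psi> Y" using pY by (simp add: divide_le_eq)
  also have "\<dots> \<le> max (b2 * Mq powr g2) (\<psi> Mq) * \<psi> Y" using pY by (intro mult_right_mono) auto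
  finally show ?thesis .
qed

lemma phi_ratio:
  assumes w: "wsc \<phi> a1 a2 d1 d2" and pos: "0 < \<phi> X" and X: "1 < X" and q: "1 \<le> q"
  shows "\<phi> (q * X) \<le> a2 * q powr d2 * \<phi> X"
proof -
  have W: "\<forall>s R. 1 < s \<longrightarrow> s \<le> R \<longrightarrow> \<phi> R / \<phi> s \<le> a2 * (R / s) powr d2"
    using w unfolding wsc_def by blast
  have "X \<le> q * X" using X q by simp
  then have "\<phi> (q * X) / \<phi> X \<le> a2 * (q * X / X) powr d2"
    using W X by blast
  then show ?thesis using pos X by (simp add: divide_le_eq)
qed

lemma mu_tail:
  fixes \<mu> :: "'a::real_normed_vector measure"
  assumes "prob_space \<mu>" and sets: "sets \<mu> = sets borel"
  shows "\<exists>R0\<ge>1. measure \<mu> {x::'a. R0 \<le> norm x} \<le> 1/10"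
proof -
  interpret prob_space \<mu> by fact
  define A where "A n = {x::'a. real n \<le> norm x}" for n :: nat
  have Am: "range A \<subseteq> sets \<mu>" unfolding A_def sets by auto
  have dec: "decseq A" unfolding A_def decseq_def by auto
  have empty: "(\<Inter>n. A n) = {}"
  proof (rule ccontr)
    assume "(\<Inter>n. A n) \<noteq> {}"
    then obtain x where "x \<in> (\<Inter>n. A n)" by blast
    then have "\<forall>n. real n \<le> norm x" unfolding A_def by blast
    moreover obtain n :: nat where "norm x < real n" using reals_Archimedean2 by blast
    ultimately show False by (meson not_le)
  qed
  have "(\<lambda>n. measure \<mu> (A n)) \<longlonglongrightarrow> measure \<mu> (\<Inter>n. A n)"
    by (rule finite_Lim_measure_decseq[OF Am dec])
  then have "(\<lambda>n. measure \<mu> (A n)) \<longlonglongrightarrow> 0" using empty by simp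
  then have "\<forall>\<^sub>F n in sequentially. measure \<mu> (A n) < 1/10"
    by (rule order_tendstoD) simp
  then obtain N where "\<forall>n\<ge>N. measure \<mu> (A n) < 1/10" by (auto simp: eventually_sequentially)
  then obtain n where n: "measure \<mu> (A n) < 1/10" by blast
  define R0 where "R0 = max 1 (real n)"
  have "{x::'a. R0 \<le> norm x} \<subseteq> A n" unfolding A_def R0_def by auto
  then have "measure \<mu> {x::'a. R0 \<le> norm x} \<le> measure \<mu> (A n)"
    using Am by (intro finite_measure_mono) auto
  then show ?thesis using n unfolding R0_def by (intro exI[of _ "max 1 (real n)"]) auto
qed

theorem lemma4p6:
  fixes \<phi> :: "real \<Rightarrow> real"
  assumes "DIM('a::euclidean_space) \<ge> 2"
    and "complete_bernstein \<phi>" and "\<phi> 1 = 1"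
    and "\<exists>a1 a2 d1 d2. wsc \<phi> a1 a2 d1 d2"
  shows "\<exists>a. 0 < a \<and> a \<le> 2 powr (-6) \<and>
    (\<forall>(M::'w measure) (W::real \<Rightarrow> 'w \<Rightarrow> 'a) S T \<psi> D \<kappa>.
       sub_setting M W S T \<phi> \<psi> \<and> bounded D \<and> open D \<and> kappa_fat \<kappa> D \<longrightarrow>
       (\<exists>C>0. \<forall>x0\<in>D. \<forall>r. 0 < r \<and> r < 1 \<and> ball x0 r \<subseteq> D \<longrightarrow>
          (\<forall>x\<in>ball x0 (a * r).
             Etau M W S T D (ball x0 (4 * a * r)) x \<le> Etau M W S T D (ball x0 r) x \<and>
             ennreal (C / \<psi> (inverse (Phi \<phi> r))) \<le> Etau M W S T D (ball x0 (4 * a * r)) x)))"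
proof -
  note cbphi = assms(2) and phi1 = assms(3)
  obtain a1 a2 d1 d2 where wphi: "wsc \<phi> a1 a2 d1 d2" using assms(4) by blast
  define a :: real where "a = 2 powr (-6)"
  have a64: "a = 1/64" unfolding a_def by (simp add: powr_minus powr_realpow)
  have apos: "0 < a" unfolding a_def by simp
  show ?thesis
  proof (rule exI[of _ a], intro conjI allI impI)
    show "0 < a" by fact
    show "a \<le> 2 powr (-6)" unfolding a_def by simp
    fix M :: "'w measure" and W :: "real \<Rightarrow> 'w \<Rightarrow> 'a" and S T \<psi> and D :: "'a set" and \<kappa>
    assume H: "sub_setting M W S T \<phi> \<psi> \<and> bounded D \<and> open D \<and> kappa_fat \<kappa> D"
    have bm: "brownian_motion M W" and subS: "subordinator M S \<phi>" and subT: "subordinator M T \<psi>"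
      and cbpsi: "complete_bernstein \<psi>" and psi1: "\<psi> 1 = 1"
      using H unfolding sub_setting_def by auto
    obtain b1 b2 g1 g2 where wpsi: "wsc \<psi> b1 b2 g1 g2" using H unfolding sub_setting_def by blast
    interpret prob_space M using bm by (simp add: brownian_motion_def)
    have mup: "prob_space (density lborel (\<lambda>y. ennreal (heat_kernel 1 (y::'a))))"
      by (rule bm_mu1_prob[OF bm])
    obtain R0 where R0: "1 \<le> R0" "measure (density lborel (\<lambda>y. ennreal (heat_kernel 1 (y::'a)))) {x::'a. R0 \<le> norm x} \<le> 1/10"
      using mu_tail[OF mup] by auto
    define q where "q = (R0 / a)^2"
    have "1 \<le> R0 / a" using R0(1) a64 by simp
    then have q1: "1 \<le> q" unfolding q_def by (simp add: one_le_power)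
    define Mq where "Mq = 20 * (a2 * q powr d2)"
    have a2pos: "0 < a2" using wphi by (simp add: wsc_def)
    have b2pos: "0 < b2" using wpsi by (simp add: wsc_def)
    have Mqpos: "0 < Mq" unfolding Mq_def using a2pos q1 by simp
    define L where "L = max (b2 * Mq powr g2) (\<psi> Mq)"
    have Lpos: "0 < L" unfolding L_def using b2pos Mqpos by (simp add: less_max_iff_disj)
    define C where "C = (1/20) / (2 * L)"
    show "\<exists>C>0. \<forall>x0\<in>D. \<forall>r. 0 < r \<and> r < 1 \<and> ball x0 r \<subseteq> D \<longrightarrow>
          (\<forall>x\<in>ball x0 (a * r).
             Etau M W S T D (ball x0 (4 * a * r)) x \<le> Etau M W S T D (ball x0 r) x \<and>
             ennreal (C / \<psi> (inverse (Phi \<phi> r))) \<le> Etau M W S T D (ball x0 (4 * a * r)) x)"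
    proof (intro exI[of _ C] conjI)
      show "0 < C" unfolding C_def using Lpos by simp
    next
      show "\<forall>x0\<in>D. \<forall>r. 0 < r \<and> r < 1 \<and> ball x0 r \<subseteq> D \<longrightarrow>
          (\<forall>x\<in>ball x0 (a * r).
             Etau M W S T D (ball x0 (4 * a * r)) x \<le> Etau M W S T D (ball x0 r) x \<and>
             ennreal (C / \<psi> (inverse (Phi \<phi> r))) \<le> Etau M W S T D (ball x0 (4 * a * r)) x)"
      proof (intro ballI allI impI conjI)
      fix x0 r x assume x0: "x0 \<in> D" and r: "0 < r \<and> r < 1 \<and> ball x0 r \<subseteq> D" and x: "x \<in> ball x0 (a * r)"
      have sub4: "ball x0 (4 * a * r) \<subseteq> ball x0 r" using r a64 by (intro subset_ball) simp
      show "Etau M W S T D (ball x0 (4 * a * r)) x \<le> Etau M W S T D (ball x0 r) x"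
        unfolding Etau_def by (intro nn_integral_mono exit_mono sub4)
      show "ennreal (C / \<psi> (inverse (Phi \<phi> r))) \<le> Etau M W S T D (ball x0 (4 * a * r)) x"
      proof -
        have r0: "0 < r" "r < 1" and rD: "ball x0 r \<subseteq> D" using r by auto
        define lam where "lam = a * r"
        have lam: "0 < lam" unfolding lam_def using apos r0 by simp
        define h where "h = (lam / R0)^2"
        have h: "0 < h" unfolding h_def using lam R0 by simp
        have sh: "lam / sqrt h = R0" unfolding h_def using lam R0 by simp
        define \<beta> where "\<beta> = measure (density lborel (\<lambda>y. ennreal (heat_kernel 1 y))) {x::'a. lam / sqrt h \<le> norm x}"
        have b10: "\<beta> \<le> 1/10" unfolding \<beta>_def sh using R0 by simp
        have bnn: "0 \<le> \<beta>" unfolding \<beta>_def by simp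
        obtain G where G: "G \<in> sets M" "\<And>\<omega> u. \<omega> \<in> G \<Longrightarrow> 0 \<le> u \<Longrightarrow> u \<le> h \<Longrightarrow> norm (W u \<omega>) \<le> 2*lam"
          "measure M (space M - G) \<le> \<beta> / (1 - \<beta>)"
          using bm_good[OF bm h lam \<beta>_def] b10 by fastforce
        have PG: "measure M (space M - G) \<le> 1/9"
        proof -
          have "\<beta> / (1 - \<beta>) \<le> (1/10) / (1 - 1/10)" using b10 bnn by (intro frac_le) auto
          then have "\<beta> / (1 - \<beta>) \<le> 1/9" by simp
          then show ?thesis using G(3) by linarith
        qed
        define Y where "Y = \<phi> (r powr (-2))"
        have rp: "1 < r powr (-2)" using r0 by (simp add: powr_minus powr_realpow one_less_inverse_iff power_less_one_iff)
        have Y1: "1 \<le> Y" unfolding Y_def using cb_mono[OF cbphi phi1, of "r powr (-2)" "r powr (-2)"] rp by simp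
        have hinv: "1 / h = q * r powr (-2)"
          unfolding h_def q_def lam_def using apos r0 R0 by (simp add: powr_minus powr_realpow field_simps)
        have rq: "r powr (-2) \<le> q * r powr (-2)"
        proof -
          have "1 * r powr (-2) \<le> q * r powr (-2)" by (rule mult_right_mono) (use q1 in auto)
          then show ?thesis by simp
        qed
        define Ph where "Ph = \<phi> (1 / h)"
        have PhY: "Y \<le> Ph" unfolding Ph_def Y_def hinv using cb_mono[OF cbphi phi1, of "r powr (-2)" "q * r powr (-2)"] rp rq by simp
        have PhU: "Ph \<le> a2 * q powr d2 * Y" unfolding Ph_def Y_def hinv
          by (rule phi_ratio[OF wphi _ rp q1]) (use Y1 Y_def in simp)
        define s where "s = (1/20) / Ph"
        have s: "0 < s" unfolding s_def using PhY Y1 by simp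
        have sinv: "1 / s = 20 * Ph" unfolding s_def by simp
        have PS: "measure M {\<omega>\<in>space M. h \<le> S s \<omega>} \<le> 1/10"
          using sub_markov[OF subS less_imp_le[OF s] h] PhY Y1 unfolding Ph_def[symmetric] s_def by simp
        define Ps where "Ps = \<psi> (1 / s)"
        have Ps1: "1 \<le> Ps" unfolding Ps_def using cb_mono[OF cbpsi psi1, of "1/s" "1/s"] sinv PhY Y1 by simp
        define t where "t = (1/20) / Ps"
        have t: "0 < t" unfolding t_def using Ps1 by simp
        have PT: "measure M {\<omega>\<in>space M. s \<le> T t \<omega>} \<le> 1/10"
          using sub_markov[OF subT less_imp_le[OF t] s] Ps1 unfolding Ps_def[symmetric] t_def by simp
        have PsL: "Ps \<le> L * \<psi> Y"
          unfolding Ps_def L_def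
        proof (rule psi_ratio[OF cbpsi psi1 wpsi Y1])
          show "Y \<le> 1 / s" unfolding sinv using PhY Y1 by linarith
          show "1 / s \<le> Mq * Y" unfolding sinv Mq_def using PhU by (simp add: mult.assoc)
        qed
        define E where "E = G \<inter> {\<omega>\<in>space M. T t \<omega> < s} \<inter> {\<omega>\<in>space M. S s \<omega> < h}"
        have Tm: "T u \<in> borel_measurable M" for u using subT by (simp add: subordinator_def)
        have Sm: "S u \<in> borel_measurable M" for u using subS by (simp add: subordinator_def)
        have Em: "E \<in> sets M" unfolding E_def using G(1) Tm Sm by measurable
        have m1: "{\<omega>\<in>space M. s \<le> T t \<omega>} \<in> events" using Tm[of t] by measurable
        have m2: "{\<omega>\<in>space M. h \<le> S s \<omega>} \<in> events" using Sm[of s] by measurable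
        have PE: "1/2 \<le> prob E"
        proof -
          have "space M - E \<subseteq> (space M - G) \<union> {\<omega>\<in>space M. s \<le> T t \<omega>} \<union> {\<omega>\<in>space M. h \<le> S s \<omega>}"
            unfolding E_def by auto
          then have "prob (space M - E) \<le> prob ((space M - G) \<union> {\<omega>\<in>space M. s \<le> T t \<omega>} \<union> {\<omega>\<in>space M. h \<le> S s \<omega>})"
            using G(1) m1 m2 by (intro finite_measure_mono) auto
          also have "\<dots> \<le> prob (space M - G) + prob {\<omega>\<in>space M. s \<le> T t \<omega>} + prob {\<omega>\<in>space M. h \<le> S s \<omega>}"
            using G(1) m1 m2 by (intro order.trans[OF measure_Un_le] add_mono order_refl measure_Un_le) auto
          finally have "prob (space M - E) \<le> 1/9 + 1/10 + 1/10" using PG PT PS by simp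
          then show ?thesis using prob_compl[OF Em] by simp
        qed
        have ptw: "ennreal t * indicator E \<omega> \<le> exit_time (YD W S T D x \<omega>) (ball x0 (4 * a * r))"
          if \<omega>: "\<omega> \<in> space M" for \<omega>
        proof (cases "\<omega> \<in> E")
          case False then show ?thesis by simp
        next
          case True
          then have \<omega>G: "\<omega> \<in> G" and Tts: "T t \<omega> < s" and Ssh: "S s \<omega> < h" unfolding E_def by auto
          have YDeq: "YD W S T D x \<omega> = (\<lambda>u. killed D (\<lambda>v. x + W (S v \<omega>) \<omega>) (T u \<omega>))"
            by (simp add: YD_def fun_eq_iff)
          have Tmono: "mono_on {0..} (\<lambda>u. T u \<omega>)" and T0: "T 0 \<omega> = 0"
            using subT \<omega> by (auto simp: subordinator_def)
          have Smono: "mono_on {0..} (\<lambda>u. S u \<omega>)"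
            using subS \<omega> by (auto simp: subordinator_def)
          have "ennreal t \<le> exit_time (\<lambda>u. killed D (\<lambda>v. x + W (S v \<omega>) \<omega>) (T u \<omega>)) (ball x0 (4 * a * r))"
          proof (rule exit_lb[OF order.trans[OF sub4 rD] s Tmono T0 Tts])
            fix v :: real assume v: "0 \<le> v" "v < s"
            have "S v \<omega> \<le> S s \<omega>" using mono_onD[OF Smono, of v s] v by simp
            then have Sv: "0 \<le> S v \<omega>" "S v \<omega> \<le> h" using sub_nonneg[OF subS \<omega> v(1)] Ssh by auto
            have Wn: "norm (W (S v \<omega>) \<omega>) \<le> 2 * lam" using G(2)[OF \<omega>G Sv] .
            have "dist x0 (x + W (S v \<omega>) \<omega>) = norm ((x0 - x) - W (S v \<omega>) \<omega>)"
              by (simp add: dist_norm algebra_simps)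
            also have "\<dots> \<le> norm (x0 - x) + norm (W (S v \<omega>) \<omega>)" by (rule norm_triangle_ineq4)
            also have "\<dots> = dist x0 x + norm (W (S v \<omega>) \<omega>)" by (simp add: dist_norm)
            also have "\<dots> < a * r + 2 * lam" using x Wn by simp
            also have "\<dots> \<le> 4 * a * r" unfolding lam_def using apos r0 by simp
            finally show "x + W (S v \<omega>) \<omega> \<in> ball x0 (4 * a * r)" by simp
          qed
          then show ?thesis using True YDeq by simp
        qed
        have "ennreal (t / 2) \<le> ennreal t * emeasure M E"
        proof -
          have "ennreal (t / 2) = ennreal (t * (1/2))" by simp
          also have "\<dots> = ennreal t * ennreal (1/2)" using t by (intro ennreal_mult) auto
          also have "\<dots> \<le> ennreal t * emeasure M E"
            unfolding emeasure_eq_measure by (intro mult_left_mono ennreal_leI[OF PE]) simp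
          finally show ?thesis .
        qed
        also have "\<dots> = (\<integral>\<^sup>+\<omega>. ennreal t * indicator E \<omega> \<partial>M)" using Em by (simp add: nn_integral_cmult_indicator)
        also have "\<dots> \<le> Etau M W S T D (ball x0 (4 * a * r)) x"
          unfolding Etau_def by (intro nn_integral_mono ptw)
        finally have main: "ennreal (t / 2) \<le> Etau M W S T D (ball x0 (4 * a * r)) x" .
        have invPhi: "inverse (Phi \<phi> r) = Y" unfolding Phi_def Y_def by simp
        have psiY: "1 \<le> \<psi> Y" using cb_mono[OF cbpsi psi1, of Y Y] Y1 by simp
        have "C / \<psi> Y \<le> t / 2"
        proof -
          have "C / \<psi> Y = 1 / (40 * (L * \<psi> Y))" unfolding C_def by simp
          also have "\<dots> \<le> 1 / (40 * Ps)" using PsL Ps1 Lpos psiY by (intro divide_left_mono mult_left_mono) auto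
          also have "\<dots> = t / 2" unfolding t_def by simp
          finally show ?thesis .
        qed
        then have "ennreal (C / \<psi> Y) \<le> ennreal (t / 2)" by (rule ennreal_leI)
        then show ?thesis using main invPhi by simp
      qed
    qed
    qed
  qed
qed

end
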